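(* Let $(q_k,p_{k1},p_{k2})_{k\ge2}$ be real numbers with $q_k>0$, $p_{k1}\ge0$, $p_{k2}>0$ and $q_k+p_{k1}+p_{k2}=1$ for all $k\ge2$. Suppose that $a_k\to a>0$ and $b_k\to b>0$ as $k\to\infty$ and that $\varrho_k$ is monotone in $k\ge N_0$ for some $N_0$. Then both $D_X(n)$ and $D_Y(n)$ are monotone in $n>N_0$, and there exist constants $0<c_7<c_8<\infty$ such that for all $n>m\ge1$, $$c_7D_X(m)\le F_X(m)\le c_8D_X(m),\quad c_7D_Y(m)\le F_Y(m)\le c_8D_Y(m),\quad c_7D_Y(m,n)\le F_Y(m,n)\le c_8D_Y(m,n).$$
   Context: For $k\ge2$, $a_k=(p_{k1}+p_{k2})/q_k$, $b_k=p_{k2}/q_k$, $A_k=\begin{pmatrix}a_k&b_k\\1&0\end{pmatrix}$, $\varrho_k=\frac{a_k+\sqrt{a_k^2+4b_k}}{2}$; $\mathbf e_1=(1,0)$, $^t$ is transpose, empty products are the identity. $D_X(n)=1+\sum_{j=n+1}^\infty\prod_{i=n+1}^j\varrho_i$, $D_Y(n)=1+\sum_{j=n+1}^\infty\prod_{i=n+1}^j\varrho_i^{-1}$, and for $1\le m<n$, $D_Y(m,n)=1+\sum_{j=m+1}^{n-1}\prod_{i=m+1}^j\varrho_i^{-1}$. For $n>m\ge1$, $F_X(m,n)=1+\sum_{s=m+1}^{n-1}\mathbf e_1A_s\cdots A_{m+1}\mathbf e_1^t$ and $F_X(m)=\lim_{n\to\infty}F_X(m,n)$. For $2\le k\le n$,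 $\zeta_{k,n}=\frac{\mathbf e_1A_{k+1}\cdots A_n\mathbf e_1^t}{\mathbf e_1A_k\cdots A_n\mathbf e_1^t}$ and $\zeta_k=\lim_{n\to\infty}\zeta_{k,n}$ (which exists under the hypotheses); $F_Y(m,n)=1+\sum_{j=m+1}^{n-1}\prod_{i=m+1}^j\zeta_i$ and $F_Y(m)=\lim_{n\to\infty}F_Y(m,n)$. All these limits are monotone limits in $[1,\infty]$. *)

theory Defs
  imports "HOL-Analysis.Analysis" "HOL-Library.Extended_Nonnegative_Real"
begin

definition aa :: "(nat \<Rightarrow> real) \<Rightarrow> (nat \<Rightarrow> real) \<Rightarrow> (nat \<Rightarrow> real) \<Rightarrow> nat \<Rightarrow> real" where
  "aa q p1 p2 k = (p1 k + p2 k) / q k"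

definition bb :: "(nat \<Rightarrow> real) \<Rightarrow> (nat \<Rightarrow> real) \<Rightarrow> (nat \<Rightarrow> real) \<Rightarrow> nat \<Rightarrow> real" where
  "bb q p1 p2 k = p2 k / q k"

definition AA :: "(nat \<Rightarrow> real) \<Rightarrow> (nat \<Rightarrow> real) \<Rightarrow> (nat \<Rightarrow> real) \<Rightarrow> nat \<Rightarrow> real^2^2" where
  "AA q p1 p2 k = (\<chi> i j. if i = 1 then (if j = 1 then aa q p1 p2 k else bb q p1 p2 k)
                          else (if j = 1 then 1 else 0))"

definition rho :: "(nat \<Rightarrow> real) \<Rightarrow> (nat \<Rightarrow> real) \<Rightarrow> (nat \<Rightarrow> real) \<Rightarrow> nat \<Rightarrow> real" where
  "rho q p1 p2 k = (aa q p1 p2 k + sqrt ((aa q p1 p2 k)^2 + 4 * bb q p1 p2 k)) / 2"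

definition mprod_up :: "(nat \<Rightarrow> real^2^2) \<Rightarrow> nat \<Rightarrow> nat \<Rightarrow> real^2^2" where
  "mprod_up M i j = foldr (**) (map M [i..<Suc j]) (mat 1)"

definition mprod_down :: "(nat \<Rightarrow> real^2^2) \<Rightarrow> nat \<Rightarrow> nat \<Rightarrow> real^2^2" where
  "mprod_down M j i = foldr (**) (rev (map M [i..<Suc j])) (mat 1)"

text \<open>e_1 M e_1^t is the (1,1) entry.\<close>
definition e11 :: "real^2^2 \<Rightarrow> real" where
  "e11 M = M $ 1 $ 1"

definition DX :: "(nat \<Rightarrow> real) \<Rightarrow> (nat \<Rightarrow> real) \<Rightarrow> (nat \<Rightarrow> real) \<Rightarrow> nat \<Rightarrow> ennreal" where
  "DX q p1 p2 n = 1 + (\<Sum>j. ennreal (\<Prod>i\<in>{n+1..n+1+j}. rho q p1 p2 i))"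

definition DY :: "(nat \<Rightarrow> real) \<Rightarrow> (nat \<Rightarrow> real) \<Rightarrow> (nat \<Rightarrow> real) \<Rightarrow> nat \<Rightarrow> ennreal" where
  "DY q p1 p2 n = 1 + (\<Sum>j. ennreal (\<Prod>i\<in>{n+1..n+1+j}. inverse (rho q p1 p2 i)))"

definition DY2 :: "(nat \<Rightarrow> real) \<Rightarrow> (nat \<Rightarrow> real) \<Rightarrow> (nat \<Rightarrow> real) \<Rightarrow> nat \<Rightarrow> nat \<Rightarrow> ennreal" where
  "DY2 q p1 p2 m n = 1 + (\<Sum>j\<in>{m+1..<n}. ennreal (\<Prod>i\<in>{m+1..j}. inverse (rho q p1 p2 i)))"

definition FX2 :: "(nat \<Rightarrow> real) \<Rightarrow> (nat \<Rightarrow> real) \<Rightarrow> (nat \<Rightarrow> real) \<Rightarrow> nat \<Rightarrow> nat \<Rightarrow> ennreal" where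
  "FX2 q p1 p2 m n = 1 + (\<Sum>s\<in>{m+1..<n}. ennreal (e11 (mprod_down (AA q p1 p2) s (m+1))))"

definition FX :: "(nat \<Rightarrow> real) \<Rightarrow> (nat \<Rightarrow> real) \<Rightarrow> (nat \<Rightarrow> real) \<Rightarrow> nat \<Rightarrow> ennreal" where
  "FX q p1 p2 m = (SUP n\<in>{m<..}. FX2 q p1 p2 m n)"

definition zeta2 :: "(nat \<Rightarrow> real) \<Rightarrow> (nat \<Rightarrow> real) \<Rightarrow> (nat \<Rightarrow> real) \<Rightarrow> nat \<Rightarrow> nat \<Rightarrow> real" where
  "zeta2 q p1 p2 k n = e11 (mprod_up (AA q p1 p2) (k+1) n) / e11 (mprod_up (AA q p1 p2) k n)"

definition zeta :: "(nat \<Rightarrow> real) \<Rightarrow> (nat \<Rightarrow> real) \<Rightarrow> (nat \<Rightarrow> real) \<Rightarrow> nat \<Rightarrow> real" where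
  "zeta q p1 p2 k = lim (\<lambda>n. zeta2 q p1 p2 k n)"

definition FY2 :: "(nat \<Rightarrow> real) \<Rightarrow> (nat \<Rightarrow> real) \<Rightarrow> (nat \<Rightarrow> real) \<Rightarrow> nat \<Rightarrow> nat \<Rightarrow> ennreal" where
  "FY2 q p1 p2 m n = 1 + (\<Sum>j\<in>{m+1..<n}. ennreal (\<Prod>i\<in>{m+1..j}. zeta q p1 p2 i))"

definition FY :: "(nat \<Rightarrow> real) \<Rightarrow> (nat \<Rightarrow> real) \<Rightarrow> (nat \<Rightarrow> real) \<Rightarrow> nat \<Rightarrow> ennreal" where
  "FY q p1 p2 m = (SUP n\<in>{m<..}. FY2 q p1 p2 m n)"

end

theory Submission
  imports Defs
begin
lemma mprod_down_step:
  "m < s \<Longrightarrow> mprod_down M s m = M s ** mprod_down M (s - 1) m"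
  unfolding mprod_down_def
  by (cases s) (auto simp: matrix_mul_assoc)

lemma mprod_down_Suc:
  "m \<le> s \<Longrightarrow> mprod_down M (Suc s) m = M (Suc s) ** mprod_down M s m"
  unfolding mprod_down_def by (simp add: matrix_mul_assoc)

lemma mprod_down_empty: "mprod_down M s (Suc s) = mat 1"
  unfolding mprod_down_def by simp

lemma mprod_up_step:
  "k \<le> n \<Longrightarrow> mprod_up M k n = M k ** mprod_up M (Suc k) n"
  unfolding mprod_up_def by (cases "k = n") (auto simp add: upt_conv_Cons)

lemma mprod_up_empty: "n < k \<Longrightarrow> mprod_up M k n = mat 1"
  unfolding mprod_up_def by simp

lemma AA_entries:
  "AA q p1 p2 k $ 1 $ 1 = aa q p1 p2 k" "AA q p1 p2 k $ 1 $ 2 = bb q p1 p2 k"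
  "AA q p1 p2 k $ 2 $ 1 = 1" "AA q p1 p2 k $ 2 $ 2 = 0"
  unfolding AA_def by auto

lemma col1_step:
  "(AA q p1 p2 k ** P) $ 1 $ 1 = aa q p1 p2 k * P $ 1 $ 1 + bb q p1 p2 k * P $ 2 $ 1"
  "(AA q p1 p2 k ** P) $ 2 $ 1 = P $ 1 $ 1"
  by (simp_all add: matrix_matrix_mult_def sum_2 AA_entries)

lemma step_lo:
  fixes r r' a' b' dd x y :: real
  assumes "r > 0" "r' > 0" "a' \<ge> 0" "b' \<ge> 0" "dd \<ge> 0" "dd * r \<le> x" "dd \<le> y"
    "r'^2 = a' * r' + b'"
  shows "dd * inverse (max 1 (r'/r)) * r' * r' \<le> a' * x + b' * y"
    "dd * inverse (max 1 (r'/r)) * r' \<le> x"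
proof -
  define m where "m = max 1 (r'/r)"
  have m1: "m \<ge> 1" unfolding m_def by simp
  have mr: "r' \<le> m * r" unfolding m_def using assms(1)
    by (metis divide_le_eq max.cobounded2)
  have "a' * r' \<le> a' * (m * r)" using mr assms(3) by (simp add: mult_left_mono)
  moreover have "b' \<le> m * b'" using m1 assms(4) by (simp add: mult_le_cancel_right1)
  ultimately have "a' * r' + b' \<le> m * (a' * r + b')" by (simp add: algebra_simps)
  hence "r' * r' \<le> m * (a' * r + b')" using assms(8) by (simp add: power2_eq_square)
  hence "r' * r' / m \<le> a' * r + b'" using m1 by (simp add: divide_le_eq mult.commute)
  hence "dd * (r' * r' / m) \<le> dd * (a' * r + b')" using assms(5) by (rule mult_left_mono)
  also have "\<dots> \<le> a' * x + b' * y"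
  proof -
    have "a' * (dd * r) \<le> a' * x" using assms(3,6) by (simp add: mult_left_mono)
    moreover have "b' * dd \<le> b' * y" using assms(4,7) by (simp add: mult_left_mono)
    ultimately show ?thesis by (simp add: algebra_simps)
  qed
  finally show "dd * inverse (max 1 (r'/r)) * r' * r' \<le> a' * x + b' * y"
    by (simp add: m_def[symmetric] field_simps)
  have "r' / m \<le> r" using mr m1 by (simp add: divide_le_eq mult.commute)
  hence "dd * (r' / m) \<le> dd * r" using assms(5) by (rule mult_left_mono)
  thus "dd * inverse (max 1 (r'/r)) * r' \<le> x" using assms(6)
    by (simp add: m_def[symmetric] field_simps)
qed

lemma step_hi:
  fixes r r' a' b' DD x y :: real
  assumes "r > 0" "r' > 0" "a' \<ge> 0" "b' \<ge> 0" "DD \<ge> 0" "x \<le> DD * r" "y \<le> DD"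
    "r'^2 = a' * r' + b'"
  shows "a' * x + b' * y \<le> DD * max 1 (r/r') * r' * r'"
    "x \<le> DD * max 1 (r/r') * r'"
proof -
  define m where "m = max 1 (r/r')"
  have m1: "m \<ge> 1" unfolding m_def by simp
  have mr: "r \<le> m * r'" unfolding m_def using assms(2)
    by (metis divide_le_eq max.cobounded2)
  have h1: "a' * x + b' * y \<le> DD * (a' * r + b')"
  proof -
    have "a' * x \<le> a' * (DD * r)" using assms(3,6) by (simp add: mult_left_mono)
    moreover have "b' * y \<le> b' * DD" using assms(4,7) by (simp add: mult_left_mono)
    ultimately show ?thesis by (simp add: algebra_simps)
  qed
  have "a' * r \<le> a' * (m * r')" using mr assms(3) by (simp add: mult_left_mono)
  moreover have "b' \<le> m * b'" using m1 assms(4) by (simp add: mult_le_cancel_right1)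
  ultimately have "a' * r + b' \<le> m * (a' * r' + b')" by (simp add: algebra_simps)
  hence "DD * (a' * r + b') \<le> DD * (m * (a' * r' + b'))" using assms(5) by (simp add: mult_left_mono)
  with h1 show "a' * x + b' * y \<le> DD * max 1 (r/r') * r' * r'"
    using assms(8) by (simp add: m_def[symmetric] power2_eq_square mult.assoc)
  have "DD * r \<le> DD * (m * r')" using mr assms(5) by (simp add: mult_left_mono)
  thus "x \<le> DD * max 1 (r/r') * r'" using assms(6) by (simp add: m_def[symmetric] mult.assoc)
qed

lemma fwd_bounds:
  fixes a b r x y :: "nat \<Rightarrow> real" and d D :: real
  assumes pos: "\<And>l. l \<ge> n0 \<Longrightarrow> a l \<ge> 0 \<and> b l \<ge> 0 \<and> r l > 0 \<and> r l ^ 2 = a l * r l + b l"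
    and rec: "\<And>s. s \<ge> n0 \<Longrightarrow> x (Suc s) = a (Suc s) * x s + b (Suc s) * y s \<and> y (Suc s) = x s"
    and d0: "d \<ge> 0" and D0: "D \<ge> 0"
    and st: "d * r n0 \<le> x n0" "x n0 \<le> D * r n0" "d \<le> y n0" "y n0 \<le> D"
    and s: "n0 \<le> s"
  shows "d * (\<Prod>l\<in>{n0..<s}. inverse (max 1 (r (Suc l) / r l)) * r (Suc l)) * r s \<le> x s
       \<and> x s \<le> D * (\<Prod>l\<in>{n0..<s}. max 1 (r l / r (Suc l)) * r (Suc l)) * r s
       \<and> d * (\<Prod>l\<in>{n0..<s}. inverse (max 1 (r (Suc l) / r l)) * r (Suc l)) \<le> y s
       \<and> y s \<le> D * (\<Prod>l\<in>{n0..<s}. max 1 (r l / r (Suc l)) * r (Suc l))"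
  using s
proof (induction s rule: dec_induct)
  case base
  then show ?case using st by simp
next
  case (step s)
  define dd where "dd = d * (\<Prod>l\<in>{n0..<s}. inverse (max 1 (r (Suc l) / r l)) * r (Suc l))"
  define DD where "DD = D * (\<Prod>l\<in>{n0..<s}. max 1 (r l / r (Suc l)) * r (Suc l))"
  have rp: "\<And>l. l \<ge> n0 \<Longrightarrow> r l > 0" using pos by blast
  have rn: "\<And>l. l \<ge> n0 \<Longrightarrow> r l \<ge> 0" using rp less_imp_le by blast
  have dd0: "dd \<ge> 0" unfolding dd_def using d0 rn by (auto intro!: prod_nonneg mult_nonneg_nonneg)
  have DD0: "DD \<ge> 0" unfolding DD_def using D0 rn by (auto intro!: prod_nonneg mult_nonneg_nonneg)
  have IH: "dd * r s \<le> x s" "x s \<le> DD * r s" "dd \<le> y s" "y s \<le> DD"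
    using step.IH unfolding dd_def DD_def by auto
  have ps: "a (Suc s) \<ge> 0" "b (Suc s) \<ge> 0" "r (Suc s) > 0" "r (Suc s) ^ 2 = a (Suc s) * r (Suc s) + b (Suc s)"
    using pos[of "Suc s"] step.hyps by auto
  have rs: "r s > 0" using rp step.hyps by auto
  note L = step_lo[OF rs ps(3) ps(1) ps(2) dd0 IH(1) IH(3) ps(4)]
  note H = step_hi[OF rs ps(3) ps(1) ps(2) DD0 IH(2) IH(4) ps(4)]
  have e1: "d * (\<Prod>l\<in>{n0..<Suc s}. inverse (max 1 (r (Suc l) / r l)) * r (Suc l))
      = dd * inverse (max 1 (r (Suc s) / r s)) * r (Suc s)"
    unfolding dd_def using step.hyps by (simp add: prod.atLeastLessThan_Suc mult.assoc)
  have e2: "D * (\<Prod>l\<in>{n0..<Suc s}. max 1 (r l / r (Suc l)) * r (Suc l))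
      = DD * max 1 (r s / r (Suc s)) * r (Suc s)"
    unfolding DD_def using step.hyps by (simp add: prod.atLeastLessThan_Suc mult.assoc)
  have rc: "x (Suc s) = a (Suc s) * x s + b (Suc s) * y s" "y (Suc s) = x s"
    using rec step.hyps by auto
  show ?case unfolding e1 e2 rc using L H by simp
qed

lemma bwd_bounds:
  fixes a b r x y :: "nat \<Rightarrow> real" and d D :: real
  assumes pos: "\<And>l. l \<ge> lo \<Longrightarrow> a l \<ge> 0 \<and> b l \<ge> 0 \<and> r l > 0 \<and> r l ^ 2 = a l * r l + b l"
    and rec: "\<And>k. lo \<le> k \<Longrightarrow> k < n0 \<Longrightarrow> x k = a k * x (Suc k) + b k * y (Suc k) \<and> y k = x (Suc k)"
    and d0: "d \<ge> 0" and D0: "D \<ge> 0"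
    and st: "d * r n0 \<le> x n0" "x n0 \<le> D * r n0" "d \<le> y n0" "y n0 \<le> D"
    and k: "lo \<le> k" "k \<le> n0"
  shows "d * (\<Prod>l\<in>{k..<n0}. inverse (max 1 (r l / r (Suc l))) * r l) * r k \<le> x k
       \<and> x k \<le> D * (\<Prod>l\<in>{k..<n0}. max 1 (r (Suc l) / r l) * r l) * r k
       \<and> d * (\<Prod>l\<in>{k..<n0}. inverse (max 1 (r l / r (Suc l))) * r l) \<le> y k
       \<and> y k \<le> D * (\<Prod>l\<in>{k..<n0}. max 1 (r (Suc l) / r l) * r l)"
  using k(2,1)
proof (induction k rule: inc_induct)
  case base
  then show ?case using st by simp
next
  case (step k)
  define dd where "dd = d * (\<Prod>l\<in>{Suc k..<n0}. inverse (max 1 (r l / r (Suc l))) * r l)"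
  define DD where "DD = D * (\<Prod>l\<in>{Suc k..<n0}. max 1 (r (Suc l) / r l) * r l)"
  have rp: "\<And>l. l \<ge> lo \<Longrightarrow> r l > 0" using pos by blast
  have rn: "\<And>l. l \<ge> lo \<Longrightarrow> r l \<ge> 0" using rp less_imp_le by blast
  have dd0: "dd \<ge> 0" unfolding dd_def using d0 rn step.prems by (auto intro!: prod_nonneg mult_nonneg_nonneg)
  have DD0: "DD \<ge> 0" unfolding DD_def using D0 rn step.prems by (auto intro!: prod_nonneg mult_nonneg_nonneg)
  have IH: "dd * r (Suc k) \<le> x (Suc k)" "x (Suc k) \<le> DD * r (Suc k)" "dd \<le> y (Suc k)" "y (Suc k) \<le> DD"
    using step.IH step.prems unfolding dd_def DD_def by auto
  have ps: "a k \<ge> 0" "b k \<ge> 0" "r k > 0" "r k ^ 2 = a k * r k + b k"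
    using pos[of k] step.prems by auto
  have rs: "r (Suc k) > 0" using rp step.prems by auto
  note L = step_lo[OF rs ps(3) ps(1) ps(2) dd0 IH(1) IH(3) ps(4)]
  note H = step_hi[OF rs ps(3) ps(1) ps(2) DD0 IH(2) IH(4) ps(4)]
  have e1: "d * (\<Prod>l\<in>{k..<n0}. inverse (max 1 (r l / r (Suc l))) * r l)
      = dd * inverse (max 1 (r k / r (Suc k))) * r k"
    unfolding dd_def using step.hyps by (simp add: prod.atLeast_Suc_lessThan mult_ac)
  have e2: "D * (\<Prod>l\<in>{k..<n0}. max 1 (r (Suc l) / r l) * r l)
      = DD * max 1 (r (Suc k) / r k) * r k"
    unfolding DD_def using step.hyps by (simp add: prod.atLeast_Suc_lessThan mult_ac)
  have rc: "x k = a k * x (Suc k) + b k * y (Suc k)" "y k = x (Suc k)"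
    using rec step.hyps step.prems by auto
  show ?case unfolding e1 e2 rc using L H by simp
qed

lemma tel_inc:
  fixes f :: "nat \<Rightarrow> real"
  assumes inc: "\<And>l. p \<le> l \<Longrightarrow> f l \<le> f (Suc l)" and fp: "\<And>l. l \<ge> p \<Longrightarrow> f l > 0" and pj: "p \<le> j"
  shows "(\<Prod>l\<in>{p..<j}. max 1 (f (Suc l) / f l)) \<le> f j / f p"
    "(\<Prod>l\<in>{p..<j}. max 1 (f l / f (Suc l))) = 1"
proof -
  show "(\<Prod>l\<in>{p..<j}. max 1 (f (Suc l) / f l)) \<le> f j / f p"
    using pj
  proof (induction j rule: dec_induct)
    case base then show ?case using fp[of p] by simp
  next
    case (step j)
    have fj: "f j > 0" "f (Suc j) > 0" "f p > 0" using fp step.hyps by auto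
    have m: "max 1 (f (Suc j) / f j) = f (Suc j) / f j"
      using inc[of j] step.hyps fj by (simp add: le_divide_eq)
    have "(\<Prod>l\<in>{p..<Suc j}. max 1 (f (Suc l) / f l)) = (\<Prod>l\<in>{p..<j}. max 1 (f (Suc l) / f l)) * (f (Suc j) / f j)"
      using step.hyps m by (simp add: prod.atLeastLessThan_Suc)
    also have "\<dots> \<le> f j / f p * (f (Suc j) / f j)"
      using step.IH fj by (intro mult_right_mono) auto
    also have "\<dots> = f (Suc j) / f p" using fj by simp
    finally show ?case .
  qed
  have "\<And>l. l \<in> {p..<j} \<Longrightarrow> max 1 (f l / f (Suc l)) = 1"
  proof -
    fix l assume "l \<in> {p..<j}"
    hence "f l \<le> f (Suc l)" "f (Suc l) > 0" using inc fp by auto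
    thus "max 1 (f l / f (Suc l)) = 1" by (simp add: divide_le_eq max_def)
  qed
  thus "(\<Prod>l\<in>{p..<j}. max 1 (f l / f (Suc l))) = 1" by simp
qed

lemma tel_dec:
  fixes f :: "nat \<Rightarrow> real"
  assumes dec: "\<And>l. p \<le> l \<Longrightarrow> f (Suc l) \<le> f l" and fp: "\<And>l. l \<ge> p \<Longrightarrow> f l > 0" and pj: "p \<le> j"
  shows "(\<Prod>l\<in>{p..<j}. max 1 (f l / f (Suc l))) \<le> f p / f j"
    "(\<Prod>l\<in>{p..<j}. max 1 (f (Suc l) / f l)) = 1"
proof -
  have g1: "\<And>l. p \<le> l \<Longrightarrow> inverse (f l) \<le> inverse (f (Suc l))" using dec fp
    by (simp add: le_imp_inverse_le)
  have g2: "\<And>l. l \<ge> p \<Longrightarrow> inverse (f l) > 0" using fp by simp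
  note T = tel_inc[of p "\<lambda>l. inverse (f l)", OF g1 g2 pj]
  have e: "\<And>x y :: real. inverse y / inverse x = x / y" by (simp add: field_simps)
  show "(\<Prod>l\<in>{p..<j}. max 1 (f l / f (Suc l))) \<le> f p / f j" using T(1) by (simp add: e)
  show "(\<Prod>l\<in>{p..<j}. max 1 (f (Suc l) / f l)) = 1" using T(2) by (simp add: e)
qed

lemma prod_max_bound:
  fixes r :: "nat \<Rightarrow> real"
  assumes rb: "\<And>l. l \<ge> 2 \<Longrightarrow> mu \<le> r l \<and> r l \<le> M" and mu: "mu > 0"
    and mono: "mono_on {N0..} r \<or> antimono_on {N0..} r"
  shows "\<exists>K \<ge> 1. \<forall>i j. 2 \<le> i \<longrightarrow> (\<Prod>l\<in>{i..<j}. max 1 (r l / r (Suc l))) \<le> K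
                 \<and> (\<Prod>l\<in>{i..<j}. max 1 (r (Suc l) / r l)) \<le> K"
proof -
  define B where "B = M / mu"
  have B1: "B \<ge> 1" unfolding B_def using rb[of 2] mu by simp
  have fb: "\<And>l. l \<ge> 2 \<Longrightarrow> 0 \<le> max 1 (r l / r (Suc l)) \<and> max 1 (r l / r (Suc l)) \<le> B
                                \<and> 0 \<le> max 1 (r (Suc l) / r l) \<and> max 1 (r (Suc l) / r l) \<le> B"
  proof -
    fix l :: nat assume l: "l \<ge> 2"
    have "mu \<le> r l" "r l \<le> M" "mu \<le> r (Suc l)" "r (Suc l) \<le> M" using rb l by auto
    hence "r l / r (Suc l) \<le> B" "r (Suc l) / r l \<le> B" unfolding B_def using mu
      by (simp_all add: frac_le)
    thus "0 \<le> max 1 (r l / r (Suc l)) \<and> max 1 (r l / r (Suc l)) \<le> B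
                                \<and> 0 \<le> max 1 (r (Suc l) / r l) \<and> max 1 (r (Suc l) / r l) \<le> B"
      using B1 by auto
  qed
  have rp: "\<And>l. l \<ge> 2 \<Longrightarrow> r l > 0" using rb mu by (meson less_le_trans)
  have tail: "(\<Prod>l\<in>{p..<j}. max 1 (r l / r (Suc l))) \<le> B \<and> (\<Prod>l\<in>{p..<j}. max 1 (r (Suc l) / r l)) \<le> B"
    if p: "p \<ge> N0" "p \<ge> 2" "p \<le> j" for p j
  proof -
    have fp: "\<And>l. l \<ge> p \<Longrightarrow> r l > 0" using rp p by auto
    have "mu \<le> r p" "r p \<le> M" "mu \<le> r j" "r j \<le> M" using rb p by auto
    hence rat: "r j / r p \<le> B" "r p / r j \<le> B" using mu unfolding B_def
      by (simp_all add: frac_le)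
    show ?thesis using mono
    proof
      assume m: "mono_on {N0..} r"
      have "\<And>l. p \<le> l \<Longrightarrow> r l \<le> r (Suc l)" using m p by (auto simp: mono_on_def)
      note T = tel_inc[of p r, OF this fp p(3)]
      show ?thesis using T rat B1 by auto
    next
      assume m: "antimono_on {N0..} r"
      have "\<And>l. p \<le> l \<Longrightarrow> r (Suc l) \<le> r l" using m p by (auto simp: monotone_on_def)
      note T = tel_dec[of p r, OF this fp p(3)]
      show ?thesis using T rat B1 by auto
    qed
  qed
  have main: "(\<Prod>l\<in>{i..<j}. max 1 (r l / r (Suc l))) \<le> B ^ (N0 + 1)
                 \<and> (\<Prod>l\<in>{i..<j}. max 1 (r (Suc l) / r l)) \<le> B ^ (N0 + 1)" if i: "2 \<le> i" for i j
  proof (cases "j \<le> max i N0")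
    case True
    have c: "card {i..<j} \<le> N0 + 1" using True by auto
    have "(\<Prod>l\<in>{i..<j}. max 1 (r l / r (Suc l))) \<le> B ^ (N0 + 1)"
      by (rule prod_le_power[OF _ c B1]) (use fb i in auto)
    moreover have "(\<Prod>l\<in>{i..<j}. max 1 (r (Suc l) / r l)) \<le> B ^ (N0 + 1)"
      by (rule prod_le_power[OF _ c B1]) (use fb i in auto)
    ultimately show ?thesis by blast
  next
    case False
    define p where "p = max i N0"
    have pj: "i \<le> p" "p \<le> j" "p \<ge> N0" "p \<ge> 2" using False i unfolding p_def by auto
    have c: "card {i..<p} \<le> N0" unfolding p_def by auto
    have h1: "(\<Prod>l\<in>{i..<p}. max 1 (r l / r (Suc l))) \<le> B ^ N0"
      by (rule prod_le_power[OF _ c B1]) (use fb i in auto)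
    have h2: "(\<Prod>l\<in>{i..<p}. max 1 (r (Suc l) / r l)) \<le> B ^ N0"
      by (rule prod_le_power[OF _ c B1]) (use fb i in auto)
    have t: "(\<Prod>l\<in>{p..<j}. max 1 (r l / r (Suc l))) \<le> B" "(\<Prod>l\<in>{p..<j}. max 1 (r (Suc l) / r l)) \<le> B"
      using tail[OF pj(3,4,2)] by auto
    have n1: "0 \<le> (\<Prod>l\<in>{p..<j}. max 1 (r l / r (Suc l)))" "0 \<le> (\<Prod>l\<in>{p..<j}. max 1 (r (Suc l) / r l))"
      "0 \<le> B ^ N0"
      using B1 by (auto intro!: prod_nonneg)
    have "(\<Prod>l\<in>{i..<j}. max 1 (r l / r (Suc l))) = (\<Prod>l\<in>{i..<p}. max 1 (r l / r (Suc l))) * (\<Prod>l\<in>{p..<j}. max 1 (r l / r (Suc l)))"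
      using pj by (simp add: prod.atLeastLessThan_concat)
    also have "\<dots> \<le> B ^ N0 * B" using h1 t(1) n1 by (intro mult_mono) auto
    finally have A1: "(\<Prod>l\<in>{i..<j}. max 1 (r l / r (Suc l))) \<le> B ^ (N0 + 1)" by (simp add: mult.commute)
    have "(\<Prod>l\<in>{i..<j}. max 1 (r (Suc l) / r l)) = (\<Prod>l\<in>{i..<p}. max 1 (r (Suc l) / r l)) * (\<Prod>l\<in>{p..<j}. max 1 (r (Suc l) / r l))"
      using pj by (simp add: prod.atLeastLessThan_concat)
    also have "\<dots> \<le> B ^ N0 * B" using h2 t(2) n1 by (intro mult_mono) auto
    finally have A2: "(\<Prod>l\<in>{i..<j}. max 1 (r (Suc l) / r l)) \<le> B ^ (N0 + 1)" by (simp add: mult.commute)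
    show ?thesis using A1 A2 by blast
  qed
  have "1 \<le> B ^ (N0 + 1)" using B1 by (rule one_le_power)
  thus ?thesis using main by (intro exI[of _ "B ^ (N0 + 1)"]) auto
qed

lemma pos_lim_lower:
  fixes f :: "nat \<Rightarrow> real"
  assumes "f \<longlonglongrightarrow> L" "L > 0" "\<And>k. k \<ge> 2 \<Longrightarrow> f k > 0"
  shows "\<exists>mu>0. \<forall>k\<ge>2. mu \<le> f k"
proof -
  have "eventually (\<lambda>k. f k > L/2) sequentially"
    using assms(1,2) by (intro order_tendstoD) auto
  then obtain N where N: "\<And>k. k \<ge> N \<Longrightarrow> f k > L/2" by (auto simp: eventually_sequentially)
  define S where "S = insert (L/2) (f ` {2..N})"
  have fin: "finite S" "S \<noteq> {}" unfolding S_def by auto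
  have Spos: "\<forall>x\<in>S. x > 0" unfolding S_def using assms by auto
  have "Min S > 0" using fin Spos by auto
  moreover have "\<forall>k\<ge>2. Min S \<le> f k"
  proof (intro allI impI)
    fix k :: nat assume k: "k \<ge> 2"
    show "Min S \<le> f k"
    proof (cases "k \<le> N")
      case True
      hence "f k \<in> S" unfolding S_def using k by auto
      thus ?thesis using fin by simp
    next
      case False
      hence "f k > L/2" using N by auto
      moreover have "Min S \<le> L/2" using fin unfolding S_def by (intro Min_le) auto
      ultimately show ?thesis by simp
    qed
  qed
  ultimately show ?thesis by blast
qed

lemma lim_upper:
  fixes f :: "nat \<Rightarrow> real"
  assumes "f \<longlonglongrightarrow> L"
  shows "\<exists>M. \<forall>k. f k \<le> M"
proof -
  have "Bseq f" using assms by (intro convergent_imp_Bseq) (auto simp: convergent_def)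
  then obtain K where "\<forall>n. norm (f n) \<le> K" by (auto elim: BseqE)
  thus ?thesis by (metis abs_le_D1 real_norm_def)
qed

lemma rho_facts:
  fixes a b :: real
  assumes "a > 0" "b > 0"
  shows "(a + sqrt (a^2 + 4*b)) / 2 > 0" "((a + sqrt (a^2 + 4*b)) / 2)^2 = a * ((a + sqrt (a^2 + 4*b)) / 2) + b"
    "a \<le> (a + sqrt (a^2 + 4*b)) / 2"
proof -
  have s: "sqrt (a^2 + 4*b) ^ 2 = a^2 + 4*b" using assms by simp
  have "sqrt (a^2) \<le> sqrt (a^2 + 4*b)" using assms by (intro real_sqrt_le_mono) simp
  hence sa: "a \<le> sqrt (a^2 + 4*b)" using assms by simp
  thus "(a + sqrt (a^2 + 4*b)) / 2 > 0" using assms by simp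
  show "a \<le> (a + sqrt (a^2 + 4*b)) / 2" using sa by simp
  show "((a + sqrt (a^2 + 4*b)) / 2)^2 = a * ((a + sqrt (a^2 + 4*b)) / 2) + b"
  proof -
    define t where "t = sqrt (a^2 + 4*b)"
    have tt: "t * t = a^2 + 4*b" using s unfolding t_def by (simp add: power2_eq_square)
    have "((a + t)/2)^2 = (a*a + 2*a*t + t*t)/4" by (simp add: power2_eq_square algebra_simps)
    also have "\<dots> = a * ((a + t)/2) + b" unfolding tt by (simp add: power2_eq_square algebra_simps)
    finally show ?thesis unfolding t_def .
  qed
qed

locale L6 =
  fixes q p1 p2 :: "nat \<Rightarrow> real" and a b :: real and N0 :: nat
  assumes hq: "\<And>k. k \<ge> 2 \<Longrightarrow> q k > 0"
    and hp1: "\<And>k. k \<ge> 2 \<Longrightarrow> p1 k \<ge> 0"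
    and hp2: "\<And>k. k \<ge> 2 \<Longrightarrow> p2 k > 0"
    and ha: "aa q p1 p2 \<longlonglongrightarrow> a" and apos: "a > 0"
    and hb: "bb q p1 p2 \<longlonglongrightarrow> b" and bpos: "b > 0"
    and hmono: "mono_on {N0..} (rho q p1 p2) \<or> antimono_on {N0..} (rho q p1 p2)"
begin

abbreviation "al \<equiv> aa q p1 p2"
abbreviation "bl \<equiv> bb q p1 p2"
abbreviation "rh \<equiv> rho q p1 p2"
abbreviation "AM \<equiv> AA q p1 p2"

lemma al_pos: "k \<ge> 2 \<Longrightarrow> al k > 0"
proof -
  assume k: "k \<ge> 2"
  have "p1 k + p2 k > 0" using hp1[OF k] hp2[OF k] by linarith
  thus ?thesis unfolding aa_def using hq[OF k] by (rule divide_pos_pos)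
qed

lemma bl_pos: "k \<ge> 2 \<Longrightarrow> bl k > 0"
  unfolding bb_def using hq hp2 by (simp add: divide_pos_pos)

lemma rh_eq: "rh k = (al k + sqrt ((al k)^2 + 4 * bl k)) / 2"
  unfolding rho_def by simp

lemma rh_facts: assumes "k \<ge> 2"
  shows "rh k > 0" "rh k ^ 2 = al k * rh k + bl k" "al k \<le> rh k"
  using rho_facts[OF al_pos[OF assms] bl_pos[OF assms]] unfolding rh_eq by auto

lemma pos_all: "k \<ge> 2 \<Longrightarrow> al k \<ge> 0 \<and> bl k \<ge> 0 \<and> rh k > 0 \<and> rh k ^ 2 = al k * rh k + bl k"
proof -
  assume k: "k \<ge> 2"
  show ?thesis using al_pos[OF k] bl_pos[OF k] rh_facts[OF k] by simp
qed

lemma rh_lim: "rh \<longlonglongrightarrow> (a + sqrt (a^2 + 4*b)) / 2"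
  unfolding rho_def by (intro tendsto_intros ha hb) auto

lemma bounds: "\<exists>mu M alpha Bm. mu > 0 \<and> alpha > 0 \<and> Bm > 0 \<and>
   (\<forall>k\<ge>2. mu \<le> rh k \<and> rh k \<le> M \<and> alpha \<le> al k \<and> al k \<le> rh k \<and> bl k \<le> Bm \<and> bl k > 0)"
proof -
  obtain mu where mu: "mu > 0" "\<forall>k\<ge>2. mu \<le> rh k"
    using pos_lim_lower[OF rh_lim rho_facts(1)[OF apos bpos]] rh_facts(1) by blast
  obtain alpha where al: "alpha > 0" "\<forall>k\<ge>2. alpha \<le> al k"
    using pos_lim_lower[OF ha apos] al_pos by blast
  obtain M where M: "\<forall>k. rh k \<le> M" using lim_upper[OF rh_lim] by blast
  obtain Bm0 where Bm: "\<forall>k. bl k \<le> Bm0" using lim_upper[OF hb] by blast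
  show ?thesis
  proof (intro exI conjI)
    show "mu > 0" "alpha > 0" "max 1 Bm0 > 0" using mu al by auto
    show "\<forall>k\<ge>2. mu \<le> rh k \<and> rh k \<le> M \<and> alpha \<le> al k \<and> al k \<le> rh k \<and> bl k \<le> max 1 Bm0 \<and> bl k > 0"
      using mu(2) al(2) M rh_facts(3) bl_pos Bm by (auto intro: max.coboundedI2)
  qed
qed

end

lemma prod_shift_first:
  fixes f :: "nat \<Rightarrow> real"
  shows "m \<le> s \<Longrightarrow> f m * (\<Prod>l\<in>{m..<s}. f (Suc l)) = (\<Prod>i\<in>{m..s}. f i)"
proof (induction s rule: dec_induct)
  case base then show ?case by simp
next
  case (step s)
  then show ?case by (simp add: prod.atLeastLessThan_Suc mult.assoc)
qed

lemma prod_inv_split: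
  fixes f g :: "nat \<Rightarrow> real"
  shows "(\<Prod>l\<in>A. inverse (f l) * g l) = inverse (\<Prod>l\<in>A. f l) * (\<Prod>l\<in>A. g l)"
  by (simp add: prod.distrib prod_inversef[symmetric] comp_def)

context L6 begin

definition "Xv m s = e11 (mprod_down AM s (m+1))"
definition "Yv m s = (mprod_down AM s (m+1)) $ 2 $ 1"

lemma X_base: "Xv m m = 1" unfolding Xv_def e11_def by (simp add: mprod_down_empty mat_def)

lemma X_rec: "m \<le> s \<Longrightarrow> Xv m (Suc s) = al (Suc s) * Xv m s + bl (Suc s) * Yv m s \<and> Yv m (Suc s) = Xv m s"
proof (cases "s = m")
  case True
  have e: "mprod_down AM (Suc m) (Suc m) = AM (Suc m) ** mat 1"
    unfolding mprod_down_def by simp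
  show ?thesis unfolding Xv_def Yv_def e11_def True using e
    by (simp add: mprod_down_empty col1_step mat_def)
next
  case False
  assume ms: "m \<le> s"
  hence "Suc m \<le> s" using False by simp
  hence e: "mprod_down AM (Suc s) (Suc m) = AM (Suc s) ** mprod_down AM s (Suc m)"
    by (rule mprod_down_Suc)
  show ?thesis unfolding Xv_def Yv_def e11_def using e by (simp add: col1_step)
qed

lemma X_start: "Xv m (Suc m) = al (Suc m) \<and> Yv m (Suc m) = 1"
  using X_rec[of m m] X_base unfolding Yv_def by (simp add: mprod_down_empty mat_def)

lemma X_bounds: "\<exists>c C. c > 0 \<and> C > 0 \<and> (\<forall>m s. 1 \<le> m \<and> m < s \<longrightarrow>
    c * (\<Prod>i\<in>{m+1..s}. rh i) \<le> Xv m s \<and> Xv m s \<le> C * (\<Prod>i\<in>{m+1..s}. rh i))"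
proof -
  obtain mu M alpha Bm where B: "mu > 0" "alpha > 0" "Bm > 0"
    "\<And>k. k \<ge> 2 \<Longrightarrow> mu \<le> rh k \<and> rh k \<le> M \<and> alpha \<le> al k \<and> al k \<le> rh k \<and> bl k \<le> Bm \<and> bl k > 0"
    using bounds by blast
  have rb: "\<And>l. 2 \<le> l \<Longrightarrow> mu \<le> rh l \<and> rh l \<le> M" using B(4) by auto
  obtain K where K: "K \<ge> 1" "\<And>i j. 2 \<le> i \<Longrightarrow> (\<Prod>l\<in>{i..<j}. max 1 (rh l / rh (Suc l))) \<le> K
                 \<and> (\<Prod>l\<in>{i..<j}. max 1 (rh (Suc l) / rh l)) \<le> K"
    using prod_max_bound[OF rb B(1) hmono] by blast
  have M0: "M > 0" using B(1) B(4)[of 2] by linarith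
  have main: "alpha / M * inverse K * (mu / M) * (\<Prod>i\<in>{m+1..s}. rh i) \<le> Xv m s
           \<and> Xv m s \<le> K * (M / mu) * (\<Prod>i\<in>{m+1..s}. rh i)" if ms: "1 \<le> m" "m < s" for m s
  proof -
    define n0 where "n0 = Suc m"
    have n02: "n0 \<ge> 2" using ms unfolding n0_def by simp
    have pos': "\<And>l. l \<ge> n0 \<Longrightarrow> al l \<ge> 0 \<and> bl l \<ge> 0 \<and> rh l > 0 \<and> rh l ^ 2 = al l * rh l + bl l"
      using pos_all n02 by auto
    have rec': "\<And>s. s \<ge> n0 \<Longrightarrow> Xv m (Suc s) = al (Suc s) * Xv m s + bl (Suc s) * Yv m s \<and> Yv m (Suc s) = Xv m s"
      using X_rec n0_def by auto
    have st: "Xv m n0 = al n0" "Yv m n0 = 1" using X_start n0_def by auto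
    have rn0: "rh n0 > 0" "al n0 \<le> rh n0" "al n0 > 0" using rh_facts[OF n02] al_pos[OF n02] by auto
    define d where "d = al n0 / rh n0"
    have d0: "d \<ge> 0" "d * rh n0 = al n0" "d \<le> 1" unfolding d_def using rn0 by auto
    have sn: "n0 \<le> s" using ms n0_def by auto
    note F = fwd_bounds[of n0 al bl rh "Xv m" "Yv m" d 1 s, OF pos' rec' d0(1) _ _ _ _ _ sn]
    have F': "d * (\<Prod>l\<in>{n0..<s}. inverse (max 1 (rh (Suc l) / rh l)) * rh (Suc l)) * rh s \<le> Xv m s"
        "Xv m s \<le> 1 * (\<Prod>l\<in>{n0..<s}. max 1 (rh l / rh (Suc l)) * rh (Suc l)) * rh s"
      using F st d0 rn0 by auto
    define Q1 where "Q1 = (\<Prod>l\<in>{n0..<s}. max 1 (rh (Suc l) / rh l))"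
    define Q2 where "Q2 = (\<Prod>l\<in>{n0..<s}. max 1 (rh l / rh (Suc l)))"
    define R where "R = (\<Prod>l\<in>{n0..<s}. rh (Suc l))"
    define P where "P = (\<Prod>i\<in>{m+1..s}. rh i)"
    have Q: "0 < Q1" "Q1 \<le> K" "0 < Q2" "Q2 \<le> K" unfolding Q1_def Q2_def
      using K(2)[OF n02, of s] by (auto intro!: prod_pos)
    have RP: "rh n0 * R = P" unfolding R_def P_def n0_def using prod_shift_first[of "Suc m" s rh] sn n0_def by simp
    have "\<And>l. l \<in> {n0..<s} \<Longrightarrow> 0 \<le> rh (Suc l)"
    proof -
      fix l assume "l \<in> {n0..<s}"
      hence "Suc l \<ge> n0" by simp
      thus "0 \<le> rh (Suc l)" using pos'[of "Suc l"] by simp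
    qed
    hence R0: "R \<ge> 0" unfolding R_def by (rule prod_nonneg)
    have rs: "mu \<le> rh s" "rh s \<le> M" "mu \<le> rh n0" "rh n0 \<le> M" "alpha \<le> al n0" using B(4) n02 sn by auto
    have P0: "P \<ge> 0" unfolding RP[symmetric] using R0 rn0(1) by simp
    have lo: "d * (inverse Q1 * R) * rh s \<le> Xv m s" using F'(1) unfolding Q1_def R_def prod_inv_split .
    have hi: "Xv m s \<le> Q2 * R * rh s" using F'(2) unfolding Q2_def R_def by (simp add: prod.distrib)
    have Rv: "R = P / rh n0" using RP rn0 by (simp add: field_simps)
    have "alpha / M * inverse K * (mu / M) * P \<le> d * (inverse Q1 * R) * rh s"
    proof -
      have "alpha / M \<le> d" unfolding d_def using rs rn0 B(2) M0 by (simp add: frac_le)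
      moreover have "inverse K \<le> inverse Q1" using Q K by simp
      moreover have "mu / M * P \<le> R * rh s" unfolding Rv
      proof -
        have "mu / M \<le> rh s / rh n0" using rs rn0 B(1) by (simp add: frac_le)
        hence "mu / M * P \<le> rh s / rh n0 * P" using P0 by (rule mult_right_mono)
        thus "mu / M * P \<le> P / rh n0 * rh s" by (simp add: mult.commute)
      qed
      moreover have "0 \<le> alpha / M" "0 \<le> inverse Q1" "0 \<le> mu / M * P" "0 \<le> inverse K"
        using B M0 Q P0 by auto
      ultimately have h1: "inverse K * (mu / M * P) \<le> inverse Q1 * (R * rh s)"
        using mult_mono by blast
      have "0 \<le> inverse K * (mu / M * P)" using \<open>0 \<le> mu / M * P\<close> \<open>0 \<le> inverse K\<close> by (rule mult_nonneg_nonneg[OF _ _, rotated])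
      hence "alpha / M * (inverse K * (mu / M * P)) \<le> d * (inverse Q1 * (R * rh s))"
        using mult_mono[OF \<open>alpha / M \<le> d\<close> h1] d0(1) by blast
      thus ?thesis by (simp add: mult_ac)
    qed
    moreover have "Q2 * R * rh s \<le> K * (M / mu) * P"
    proof -
      have "R * rh s \<le> M / mu * P" unfolding Rv
      proof -
        have "rh s / rh n0 \<le> M / mu" using rs rn0 B(1) by (simp add: frac_le)
        hence "rh s / rh n0 * P \<le> M / mu * P" using P0 by (rule mult_right_mono)
        thus "P / rh n0 * rh s \<le> M / mu * P" by (simp add: mult.commute)
      qed
      moreover have "0 \<le> R * rh s" using R0 rs B(1) by simp
      ultimately have "Q2 * (R * rh s) \<le> K * (M / mu * P)" using Q K(1) mult_mono[of Q2 K "R * rh s" "M / mu * P"] by simp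
      thus ?thesis by (simp add: mult_ac)
    qed
    ultimately show ?thesis using lo hi unfolding P_def by linarith
  qed
  show ?thesis
    apply (rule exI[of _ "alpha / M * inverse K * (mu / M)"], rule exI[of _ "K * (M / mu)"])
    using main B M0 K by auto
qed

end

context L6 begin

definition "Gv n k = e11 (mprod_up AM k n)"
definition "Hv n k = (mprod_up AM k n) $ 2 $ 1"

lemma G_rec: "k \<le> n \<Longrightarrow> Gv n k = al k * Gv n (Suc k) + bl k * Hv n (Suc k) \<and> Hv n k = Gv n (Suc k)"
  unfolding Gv_def Hv_def e11_def using mprod_up_step[of k n AM] by (simp add: col1_step)

lemma G_empty: "Gv n (Suc n) = 1" "Hv n (Suc n) = 0"
  unfolding Gv_def Hv_def e11_def by (simp_all add: mprod_up_empty mat_def)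

lemma G_start: "Gv n n = al n \<and> Hv n n = 1"
  using G_rec[of n n] G_empty by simp

lemma G_bounds: "\<exists>c C. c > 0 \<and> C > 0 \<and> (\<forall>n k. 2 \<le> k \<and> k \<le> Suc n \<longrightarrow>
    c * (\<Prod>l\<in>{k..<n}. rh l) \<le> Gv n k \<and> Gv n k \<le> C * (\<Prod>l\<in>{k..<n}. rh l))"
proof -
  obtain mu M alpha Bm where B: "mu > 0" "alpha > 0" "Bm > 0"
    "\<And>k. k \<ge> 2 \<Longrightarrow> mu \<le> rh k \<and> rh k \<le> M \<and> alpha \<le> al k \<and> al k \<le> rh k \<and> bl k \<le> Bm \<and> bl k > 0"
    using bounds by blast
  have rb: "\<And>l. 2 \<le> l \<Longrightarrow> mu \<le> rh l \<and> rh l \<le> M" using B(4) by auto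
  obtain K where K: "K \<ge> 1" "\<And>i j. 2 \<le> i \<Longrightarrow> (\<Prod>l\<in>{i..<j}. max 1 (rh l / rh (Suc l))) \<le> K
                 \<and> (\<Prod>l\<in>{i..<j}. max 1 (rh (Suc l) / rh l)) \<le> K"
    using prod_max_bound[OF rb B(1) hmono] by blast
  have M0: "M > 0" using B(1) B(4)[of 2] by linarith
  have main: "alpha / M * inverse K * mu * (\<Prod>l\<in>{k..<n}. rh l) \<le> Gv n k
           \<and> Gv n k \<le> K * M * (\<Prod>l\<in>{k..<n}. rh l)" if kn: "2 \<le> k" "k \<le> n" for n k
  proof -
    have n2: "n \<ge> 2" using kn by simp
    have pos': "\<And>l. l \<ge> 2 \<Longrightarrow> al l \<ge> 0 \<and> bl l \<ge> 0 \<and> rh l > 0 \<and> rh l ^ 2 = al l * rh l + bl l"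
      using pos_all by auto
    have rec': "\<And>k. 2 \<le> k \<Longrightarrow> k < n \<Longrightarrow> Gv n k = al k * Gv n (Suc k) + bl k * Hv n (Suc k) \<and> Hv n k = Gv n (Suc k)"
      using G_rec by auto
    have st: "Gv n n = al n" "Hv n n = 1" using G_start by auto
    have rn0: "rh n > 0" "al n \<le> rh n" "al n > 0" using rh_facts[OF n2] al_pos[OF n2] by auto
    define d where "d = al n / rh n"
    have d0: "d \<ge> 0" "d * rh n = al n" "d \<le> 1" unfolding d_def using rn0 by auto
    note F = bwd_bounds[of 2 al bl rh n "Gv n" "Hv n" d 1 k, OF pos' rec' d0(1) _ _ _ _ _ kn]
    have F': "d * (\<Prod>l\<in>{k..<n}. inverse (max 1 (rh l / rh (Suc l))) * rh l) * rh k \<le> Gv n k"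
        "Gv n k \<le> 1 * (\<Prod>l\<in>{k..<n}. max 1 (rh (Suc l) / rh l) * rh l) * rh k"
      using F st d0 rn0 by auto
    define Q1 where "Q1 = (\<Prod>l\<in>{k..<n}. max 1 (rh l / rh (Suc l)))"
    define Q2 where "Q2 = (\<Prod>l\<in>{k..<n}. max 1 (rh (Suc l) / rh l))"
    define R where "R = (\<Prod>l\<in>{k..<n}. rh l)"
    have Q: "0 < Q1" "Q1 \<le> K" "0 < Q2" "Q2 \<le> K" unfolding Q1_def Q2_def
      using K(2)[OF kn(1), of n] by (auto intro!: prod_pos)
    have "\<And>l. l \<in> {k..<n} \<Longrightarrow> 0 \<le> rh l"
    proof -
      fix l assume "l \<in> {k..<n}"
      hence "l \<ge> 2" using kn by simp
      thus "0 \<le> rh l" using pos'[of l] by simp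
    qed
    hence R0: "R \<ge> 0" unfolding R_def by (rule prod_nonneg)
    have rs: "mu \<le> rh k" "rh k \<le> M" "mu \<le> rh n" "rh n \<le> M" "alpha \<le> al n" using B(4) n2 kn by auto
    have lo: "d * (inverse Q1 * R) * rh k \<le> Gv n k" using F'(1) unfolding Q1_def R_def prod_inv_split .
    have hi: "Gv n k \<le> Q2 * R * rh k" using F'(2) unfolding Q2_def R_def by (simp add: prod.distrib)
    have "alpha / M * inverse K * mu * R \<le> d * (inverse Q1 * R) * rh k"
    proof -
      have a1: "alpha / M \<le> d" unfolding d_def using rs rn0 B(2) M0 by (simp add: frac_le)
      have a2: "inverse K \<le> inverse Q1" using Q K by simp
      have a3: "mu * R \<le> R * rh k" using mult_left_mono[OF rs(1) R0] by (simp add: mult.commute)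
      have "0 \<le> inverse Q1" "0 \<le> mu * R" "0 \<le> inverse K" using B Q R0 K by auto
      hence h1: "inverse K * (mu * R) \<le> inverse Q1 * (R * rh k)"
        using mult_mono[OF a2 a3] by blast
      have "0 \<le> inverse K * (mu * R)" using \<open>0 \<le> mu * R\<close> \<open>0 \<le> inverse K\<close> by simp
      hence "alpha / M * (inverse K * (mu * R)) \<le> d * (inverse Q1 * (R * rh k))"
        using mult_mono[OF a1 h1] d0(1) by blast
      thus ?thesis by (simp add: mult_ac)
    qed
    moreover have "Q2 * R * rh k \<le> K * M * R"
    proof -
      have "R * rh k \<le> M * R" using mult_left_mono[OF rs(2) R0] by (simp add: mult.commute)
      moreover have "0 \<le> R * rh k" using R0 rs B(1) by simp
      ultimately have "Q2 * (R * rh k) \<le> K * (M * R)" using Q K(1) mult_mono[of Q2 K "R * rh k" "M * R"] by simp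
      thus ?thesis by (simp add: mult_ac)
    qed
    ultimately show ?thesis using lo hi unfolding R_def by linarith
  qed
  define c where "c = min 1 (alpha / M * inverse K * mu)"
  define C where "C = max 1 (K * M)"
  have c0: "c > 0" "c \<le> 1" unfolding c_def using B M0 K by auto
  have C0: "C > 0" "C \<ge> 1" unfolding C_def by auto
  have "c * (\<Prod>l\<in>{k..<n}. rh l) \<le> Gv n k \<and> Gv n k \<le> C * (\<Prod>l\<in>{k..<n}. rh l)"
    if kn: "2 \<le> k" "k \<le> Suc n" for n k
  proof (cases "k = Suc n")
    case True
    then show ?thesis using G_empty c0 C0 by simp
  next
    case False
    hence kn': "k \<le> n" using kn by simp
    have R0: "0 \<le> (\<Prod>l\<in>{k..<n}. rh l)" using pos_all kn by (auto intro!: prod_nonneg simp: less_imp_le)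
    have "c * (\<Prod>l\<in>{k..<n}. rh l) \<le> alpha / M * inverse K * mu * (\<Prod>l\<in>{k..<n}. rh l)"
      unfolding c_def using R0 by (intro mult_right_mono) auto
    moreover have "K * M * (\<Prod>l\<in>{k..<n}. rh l) \<le> C * (\<Prod>l\<in>{k..<n}. rh l)"
      unfolding C_def using R0 by (intro mult_right_mono) auto
    ultimately show ?thesis using main[OF kn(1) kn'] by linarith
  qed
  thus ?thesis using c0 C0 by blast
qed

end

lemma conv_of_summable_diff:
  fixes t :: "nat \<Rightarrow> real"
  assumes "summable (\<lambda>n. norm (t (Suc n) - t n))"
  shows "convergent t"
proof -
  have s: "summable (\<lambda>n. t (Suc n) - t n)" using assms by (rule summable_norm_cancel)
  have "(\<lambda>n. \<Sum>i<n. t (Suc i) - t i) \<longlonglongrightarrow> suminf (\<lambda>n. t (Suc n) - t n)"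
    using s by (rule summable_LIMSEQ)
  hence "(\<lambda>n. t n - t 0) \<longlonglongrightarrow> suminf (\<lambda>n. t (Suc n) - t n)"
    by (simp add: sum_lessThan_telescope)
  hence "(\<lambda>n. (t n - t 0) + t 0) \<longlonglongrightarrow> suminf (\<lambda>n. t (Suc n) - t n) + t 0"
    by (intro tendsto_add) auto
  thus ?thesis unfolding convergent_def by auto
qed

context L6 begin

lemma W_formula:
  assumes "2 \<le> k" "k \<le> n"
  shows "\<bar>Gv n k * Hv (Suc n) k - Hv n k * Gv (Suc n) k\<bar> = (\<Prod>i\<in>{k..n}. bl i)"
  using assms(2,1)
proof (induction k rule: inc_induct)
  case base
  have e: "Gv (Suc n) n = al n * al (Suc n) + bl n" "Hv (Suc n) n = al (Suc n)"
    using G_rec[of n "Suc n"] G_start[of "Suc n"] by auto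
  show ?case using G_start[of n] e bl_pos[OF base] by (simp add: algebra_simps)
next
  case (step k)
  have r1: "Gv n k = al k * Gv n (Suc k) + bl k * Hv n (Suc k)" "Hv n k = Gv n (Suc k)"
    using G_rec[of k n] step.hyps by auto
  have r2: "Gv (Suc n) k = al k * Gv (Suc n) (Suc k) + bl k * Hv (Suc n) (Suc k)" "Hv (Suc n) k = Gv (Suc n) (Suc k)"
    using G_rec[of k "Suc n"] step.hyps by auto
  have "Gv n k * Hv (Suc n) k - Hv n k * Gv (Suc n) k
      = - bl k * (Gv n (Suc k) * Hv (Suc n) (Suc k) - Hv n (Suc k) * Gv (Suc n) (Suc k))"
    unfolding r1 r2 by (simp add: algebra_simps)
  hence "\<bar>Gv n k * Hv (Suc n) k - Hv n k * Gv (Suc n) k\<bar> = bl k * (\<Prod>i\<in>{Suc k..n}. bl i)"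
    using step.IH step.prems bl_pos[of k] by (simp add: abs_mult)
  also have "\<dots> = (\<Prod>i\<in>{k..n}. bl i)" using step.hyps by (simp add: prod.atLeast_Suc_atMost)
  finally show ?case .
qed

lemma zeta2_eq: "k \<le> n \<Longrightarrow> zeta2 q p1 p2 k n = Hv n k / Gv n k"
  unfolding zeta2_def using G_rec[of k n] by (simp add: Gv_def)

lemma zeta_conv: assumes k: "k \<ge> 2" shows "(\<lambda>n. zeta2 q p1 p2 k n) \<longlonglongrightarrow> zeta q p1 p2 k"
proof -
  obtain mu M alpha Bm where B: "mu > 0" "alpha > 0" "Bm > 0"
    "\<And>k. k \<ge> 2 \<Longrightarrow> mu \<le> rh k \<and> rh k \<le> M \<and> alpha \<le> al k \<and> al k \<le> rh k \<and> bl k \<le> Bm \<and> bl k > 0"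
    using bounds by blast
  obtain c C where cC: "c > 0" "C > 0" "\<And>n k. 2 \<le> k \<Longrightarrow> k \<le> Suc n \<Longrightarrow>
    c * (\<Prod>l\<in>{k..<n}. rh l) \<le> Gv n k \<and> Gv n k \<le> C * (\<Prod>l\<in>{k..<n}. rh l)"
    using G_bounds by blast
  define th where "th = Bm / (alpha * mu + Bm)"
  have am0: "alpha * mu > 0" using B by simp
  have th: "0 < th" "th < 1" unfolding th_def using B(3) am0 by (auto simp: divide_less_eq)
  have thb: "bl l / (rh l * rh l) \<le> th" if l: "l \<ge> 2" for l
  proof -
    have f: "mu \<le> rh l" "alpha \<le> al l" "bl l \<le> Bm" "bl l > 0" using B(4)[OF l] by auto
    have rr: "rh l * rh l = al l * rh l + bl l" using rh_facts(2)[OF l] by (simp add: power2_eq_square)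
    have am: "alpha * mu \<le> al l * rh l" using f B by (intro mult_mono) auto
    have "bl l * (alpha * mu) \<le> Bm * (al l * rh l)" using f am B by (intro mult_mono) auto
    hence "bl l * (alpha * mu + Bm) \<le> Bm * (al l * rh l + bl l)" by (simp add: algebra_simps)
    moreover have "al l * rh l + bl l > 0" using f(4) rh_facts(1)[OF l] al_pos[OF l]
      by (simp add: add_pos_pos)
    moreover have "alpha * mu + Bm > 0" using am0 B(3) by simp
    ultimately show ?thesis unfolding th_def rr by (simp add: field_simps mult.commute)
  qed
  define t where "t n = zeta2 q p1 p2 k n" for n
  define Cs where "Cs = Bm / (mu * c * c)"
  have db: "norm (t (Suc n) - t n) \<le> Cs / th ^ k * th ^ n" if n: "n \<ge> k" for n
  proof -
    define g where "g = Gv n k" define g' where "g' = Gv (Suc n) k"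
    define h where "h = Hv n k" define h' where "h' = Hv (Suc n) k"
    define R where "R = (\<Prod>l\<in>{k..<n}. rh l)"
    have R0: "R > 0" unfolding R_def using rh_facts(1) k by (auto intro!: prod_pos)
    have g: "g \<ge> c * R" unfolding g_def R_def using cC(3)[of k n] k n by auto
    have g': "g' \<ge> c * (R * rh n)" unfolding g'_def R_def using cC(3)[of k "Suc n"] k n by auto
    have rn: "rh n \<ge> mu" "bl n \<le> Bm" "bl n > 0" using B(4)[of n] k n by auto
    have gp: "g > 0" "g' > 0" using g g' cC R0 rn B(1)
      by (smt (verit) mult_pos_pos)+
    have W: "\<bar>g * h' - h * g'\<bar> = (\<Prod>i\<in>{k..n}. bl i)" unfolding g_def g'_def h_def h'_def
      using W_formula[OF k n] .
    have tt: "t (Suc n) - t n = (h' * g - h * g') / (g * g')"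
      unfolding t_def g_def g'_def h_def h'_def using zeta2_eq n gp
      by (simp add: g_def g'_def field_simps)
    have "norm (t (Suc n) - t n) = (\<Prod>i\<in>{k..n}. bl i) / (g * g')"
      unfolding tt using W gp by (simp add: abs_minus_commute mult.commute)
    also have "(\<Prod>i\<in>{k..n}. bl i) = (\<Prod>l\<in>{k..<n}. bl l) * bl n"
      using n by (simp add: prod.atLeastLessThan_Suc atLeastLessThanSuc_atLeastAtMost[symmetric])
    also have "\<dots> / (g * g') \<le> ((\<Prod>l\<in>{k..<n}. bl l) * bl n) / ((c * R) * (c * (R * rh n)))"
      using g g' gp R0 cC rn B(1) k by (intro divide_left_mono mult_mono mult_pos_pos mult_nonneg_nonneg prod_nonneg)
        (auto intro!: prod_nonneg less_imp_le[OF bl_pos] simp: less_imp_le)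
    also have "\<dots> = (\<Prod>l\<in>{k..<n}. bl l / (rh l * rh l)) * (bl n / rh n) / (c * c)"
      using R0 rn B(1) cC(1) unfolding R_def by (simp add: prod_dividef prod.distrib field_simps)
    also have "\<dots> \<le> th ^ (n - k) * (Bm / mu) / (c * c)"
    proof -
      have "(\<Prod>l\<in>{k..<n}. bl l / (rh l * rh l)) \<le> (\<Prod>l\<in>{k..<n}. th)"
        using thb k by (intro prod_mono) (auto intro!: divide_nonneg_pos less_imp_le[OF bl_pos] mult_pos_pos rh_facts(1))
      hence p: "(\<Prod>l\<in>{k..<n}. bl l / (rh l * rh l)) \<le> th ^ (n - k)" by simp
      have q: "bl n / rh n \<le> Bm / mu" using rn B(1) by (simp add: frac_le)
      have "(\<Prod>l\<in>{k..<n}. bl l / (rh l * rh l)) * (bl n / rh n) \<le> th ^ (n - k) * (Bm / mu)"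
        using p q rn B(1) th k by (intro mult_mono) (auto intro!: prod_nonneg divide_nonneg_pos less_imp_le[OF bl_pos] mult_pos_pos rh_facts(1) simp: less_imp_le)
      hence "(\<Prod>l\<in>{k..<n}. bl l / (rh l * rh l)) * (bl n / rh n) / (c * c) \<le> th ^ (n - k) * (Bm / mu) / (c * c)"
        using cC(1) by (intro divide_right_mono) auto
      thus ?thesis .
    qed
    also have "\<dots> = Cs / th ^ k * th ^ n"
      unfolding Cs_def using th n by (simp add: power_diff field_simps)
    finally show ?thesis .
  qed
  have "summable (\<lambda>n. Cs / th ^ k * th ^ n)" using th by (intro summable_mult summable_geometric) auto
  hence "summable (\<lambda>n. norm (t (Suc n) - t n))"
    by (rule summable_comparison_test') (use db in auto)
  hence "convergent t" by (rule conv_of_summable_diff)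
  thus ?thesis unfolding t_def zeta_def by (simp add: convergent_LIMSEQ_iff)
qed

end

context L6 begin

lemma G_pos: "2 \<le> k \<Longrightarrow> k \<le> Suc n \<Longrightarrow> Gv n k > 0"
proof -
  assume k: "2 \<le> k" "k \<le> Suc n"
  obtain c C where cC: "c > 0" "C > 0" "\<And>n k. 2 \<le> k \<Longrightarrow> k \<le> Suc n \<Longrightarrow>
    c * (\<Prod>l\<in>{k..<n}. rh l) \<le> Gv n k \<and> Gv n k \<le> C * (\<Prod>l\<in>{k..<n}. rh l)"
    using G_bounds by blast
  have "(\<Prod>l\<in>{k..<n}. rh l) > 0" using rh_facts(1) k by (auto intro!: prod_pos)
  hence "c * (\<Prod>l\<in>{k..<n}. rh l) > 0" using cC by simp
  thus ?thesis using cC(3)[OF k] by linarith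
qed

lemma zeta2_tele:
  assumes "2 \<le> k0" "k0 \<le> j" "j \<le> n"
  shows "(\<Prod>i\<in>{k0..j}. zeta2 q p1 p2 i n) = Gv n (Suc j) / Gv n k0"
  using assms(2,3)
proof (induction j rule: dec_induct)
  case base
  then show ?case unfolding zeta2_def Gv_def by simp
next
  case (step j)
  have p: "Gv n (Suc j) > 0" using G_pos[of "Suc j" n] assms(1) step by simp
  have "(\<Prod>i\<in>{k0..Suc j}. zeta2 q p1 p2 i n) = (\<Prod>i\<in>{k0..j}. zeta2 q p1 p2 i n) * zeta2 q p1 p2 (Suc j) n"
    using step.hyps by simp
  also have "\<dots> = Gv n (Suc j) / Gv n k0 * (Gv n (Suc (Suc j)) / Gv n (Suc j))"
    using step by (simp add: zeta2_def Gv_def)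
  also have "\<dots> = Gv n (Suc (Suc j)) / Gv n k0" using p by simp
  finally show ?case .
qed

lemma zeta_prod_bounds: "\<exists>c C. c > 0 \<and> C > 0 \<and> (\<forall>k0 j. 2 \<le> k0 \<and> k0 \<le> j \<longrightarrow>
   c * (\<Prod>i\<in>{k0..j}. inverse (rh i)) \<le> (\<Prod>i\<in>{k0..j}. zeta q p1 p2 i)
   \<and> (\<Prod>i\<in>{k0..j}. zeta q p1 p2 i) \<le> C * (\<Prod>i\<in>{k0..j}. inverse (rh i)))"
proof -
  obtain c C where cC: "c > 0" "C > 0" "\<And>n k. 2 \<le> k \<Longrightarrow> k \<le> Suc n \<Longrightarrow>
    c * (\<Prod>l\<in>{k..<n}. rh l) \<le> Gv n k \<and> Gv n k \<le> C * (\<Prod>l\<in>{k..<n}. rh l)"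
    using G_bounds by blast
  have fin: "c / C * (\<Prod>i\<in>{k0..j}. inverse (rh i)) \<le> (\<Prod>i\<in>{k0..j}. zeta q p1 p2 i)
   \<and> (\<Prod>i\<in>{k0..j}. zeta q p1 p2 i) \<le> C / c * (\<Prod>i\<in>{k0..j}. inverse (rh i))"
    if kj: "2 \<le> k0" "k0 \<le> j" for k0 j
  proof -
    define P where "P = (\<Prod>i\<in>{k0..j}. rh i)"
    have P0: "P > 0" unfolding P_def using rh_facts(1) kj by (auto intro!: prod_pos)
    have Pinv: "(\<Prod>i\<in>{k0..j}. inverse (rh i)) = inverse P"
      unfolding P_def using prod_inversef[of rh "{k0..j}"] by (simp add: comp_def)
    have bnd: "c / C * inverse P \<le> (\<Prod>i\<in>{k0..j}. zeta2 q p1 p2 i n)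
       \<and> (\<Prod>i\<in>{k0..j}. zeta2 q p1 p2 i n) \<le> C / c * inverse P" if n: "n \<ge> Suc j" for n
    proof -
      define R2 where "R2 = (\<Prod>l\<in>{Suc j..<n}. rh l)"
      have R20: "R2 > 0" unfolding R2_def using rh_facts(1) kj by (auto intro!: prod_pos)
      have R1: "(\<Prod>l\<in>{k0..<n}. rh l) = P * R2" unfolding P_def R2_def
        using prod.atLeastLessThan_concat[of k0 "Suc j" n rh] kj n
        by (simp add: atLeastLessThanSuc_atLeastAtMost)
      have g1: "c * R2 \<le> Gv n (Suc j)" "Gv n (Suc j) \<le> C * R2"
        using cC(3)[of "Suc j" n] kj n unfolding R2_def by auto
      have g2: "c * (P * R2) \<le> Gv n k0" "Gv n k0 \<le> C * (P * R2)"
        using cC(3)[of k0 n] kj n unfolding R1 by auto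
      have gp: "Gv n k0 > 0" "Gv n (Suc j) > 0" using G_pos kj n by auto
      have e: "(\<Prod>i\<in>{k0..j}. zeta2 q p1 p2 i n) = Gv n (Suc j) / Gv n k0"
        using zeta2_tele kj n by auto
      have "c / C * inverse P = (c * R2) / (C * (P * R2))" using R20 P0 cC by (simp add: field_simps)
      also have "\<dots> \<le> Gv n (Suc j) / Gv n k0"
        using g1 g2 gp R20 P0 cC by (intro frac_le) auto
      finally have l: "c / C * inverse P \<le> Gv n (Suc j) / Gv n k0" .
      have "Gv n (Suc j) / Gv n k0 \<le> (C * R2) / (c * (P * R2))"
        using g1 g2 gp R20 P0 cC by (intro frac_le) auto
      also have "\<dots> = C / c * inverse P" using R20 P0 cC by (simp add: field_simps)
      finally show ?thesis using l e by simp
    qed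
    have lim: "(\<lambda>n. \<Prod>i\<in>{k0..j}. zeta2 q p1 p2 i n) \<longlonglongrightarrow> (\<Prod>i\<in>{k0..j}. zeta q p1 p2 i)"
      using zeta_conv kj by (intro tendsto_prod) auto
    have ev: "eventually (\<lambda>n. n \<ge> Suc j) sequentially" by (rule eventually_ge_at_top)
    have "c / C * inverse P \<le> (\<Prod>i\<in>{k0..j}. zeta q p1 p2 i)"
    proof (rule tendsto_lowerbound[OF lim])
      show "eventually (\<lambda>n. c / C * inverse P \<le> (\<Prod>i\<in>{k0..j}. zeta2 q p1 p2 i n)) sequentially"
        using ev by (rule eventually_mono) (use bnd in blast)
    qed simp
    moreover have "(\<Prod>i\<in>{k0..j}. zeta q p1 p2 i) \<le> C / c * inverse P"
    proof (rule tendsto_upperbound[OF lim])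
      show "eventually (\<lambda>n. (\<Prod>i\<in>{k0..j}. zeta2 q p1 p2 i n) \<le> C / c * inverse P) sequentially"
        using ev by (rule eventually_mono) (use bnd in blast)
    qed simp
    ultimately show ?thesis unfolding Pinv by simp
  qed
  show ?thesis using fin cC by (intro exI[of _ "c / C"] exI[of _ "C / c"]) auto
qed

end

lemma en_lo_inf:
  fixes u v :: "nat \<Rightarrow> real"
  assumes "0 \<le> c" "c \<le> 1" "\<And>j. 0 \<le> u j" "\<And>j. c * u j \<le> v j"
  shows "ennreal c * (1 + (\<Sum>j. ennreal (u j))) \<le> 1 + (\<Sum>j. ennreal (v j))"
proof -
  have "ennreal c * (1 + (\<Sum>j. ennreal (u j))) = ennreal c + (\<Sum>j. ennreal c * ennreal (u j))"
    by (simp add: distrib_left)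
  also have "(\<Sum>j. ennreal c * ennreal (u j)) = (\<Sum>j. ennreal (c * u j))"
    using assms(1,3) by (simp add: ennreal_mult)
  also have "\<dots> \<le> (\<Sum>j. ennreal (v j))"
    using assms(4) by (intro suminf_le ennreal_leI) auto
  finally have "ennreal c * (1 + (\<Sum>j. ennreal (u j))) \<le> ennreal c + (\<Sum>j. ennreal (v j))"
    by (simp add: add_left_mono)
  also have "\<dots> \<le> 1 + (\<Sum>j. ennreal (v j))" using assms(2) by (intro add_right_mono) (simp add: ennreal_leI[of c 1, simplified])
  finally show ?thesis .
qed

lemma en_hi_inf:
  fixes u v :: "nat \<Rightarrow> real"
  assumes "1 \<le> C" "\<And>j. 0 \<le> u j" "\<And>j. v j \<le> C * u j"
  shows "1 + (\<Sum>j. ennreal (v j)) \<le> ennreal C * (1 + (\<Sum>j. ennreal (u j)))"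
proof -
  have "(\<Sum>j. ennreal (v j)) \<le> (\<Sum>j. ennreal (C * u j))"
    using assms(3) by (intro suminf_le ennreal_leI) auto
  also have "\<dots> = (\<Sum>j. ennreal C * ennreal (u j))"
    using assms(1,2) by (simp add: ennreal_mult)
  finally have "1 + (\<Sum>j. ennreal (v j)) \<le> ennreal C + (\<Sum>j. ennreal C * ennreal (u j))"
    using assms(1) by (intro add_mono) (simp_all add: ennreal_leI[of 1 C, simplified])
  also have "\<dots> = ennreal C * (1 + (\<Sum>j. ennreal (u j)))"
    by (simp add: distrib_left)
  finally show ?thesis .
qed

lemma en_lo_fin:
  fixes u v :: "nat \<Rightarrow> real"
  assumes "0 \<le> c" "c \<le> 1" "\<And>j. j \<in> A \<Longrightarrow> 0 \<le> u j" "\<And>j. j \<in> A \<Longrightarrow> c * u j \<le> v j"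
  shows "ennreal c * (1 + (\<Sum>j\<in>A. ennreal (u j))) \<le> 1 + (\<Sum>j\<in>A. ennreal (v j))"
proof -
  have "ennreal c * (1 + (\<Sum>j\<in>A. ennreal (u j))) = ennreal c + (\<Sum>j\<in>A. ennreal c * ennreal (u j))"
    by (simp add: distrib_left sum_distrib_left)
  also have "(\<Sum>j\<in>A. ennreal c * ennreal (u j)) = (\<Sum>j\<in>A. ennreal (c * u j))"
    using assms(1,3) by (intro sum.cong) (simp_all add: ennreal_mult)
  also have "\<dots> \<le> (\<Sum>j\<in>A. ennreal (v j))"
    using assms(4) by (intro sum_mono ennreal_leI) auto
  finally have "ennreal c * (1 + (\<Sum>j\<in>A. ennreal (u j))) \<le> ennreal c + (\<Sum>j\<in>A. ennreal (v j))"
    by (simp add: add_left_mono)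
  also have "\<dots> \<le> 1 + (\<Sum>j\<in>A. ennreal (v j))" using assms(2) by (intro add_right_mono) (simp add: ennreal_leI[of c 1, simplified])
  finally show ?thesis .
qed

lemma en_hi_fin:
  fixes u v :: "nat \<Rightarrow> real"
  assumes "1 \<le> C" "\<And>j. j \<in> A \<Longrightarrow> 0 \<le> u j" "\<And>j. j \<in> A \<Longrightarrow> v j \<le> C * u j"
  shows "1 + (\<Sum>j\<in>A. ennreal (v j)) \<le> ennreal C * (1 + (\<Sum>j\<in>A. ennreal (u j)))"
proof -
  have "(\<Sum>j\<in>A. ennreal (v j)) \<le> (\<Sum>j\<in>A. ennreal (C * u j))"
    using assms(3) by (intro sum_mono ennreal_leI) auto
  also have "\<dots> = (\<Sum>j\<in>A. ennreal C * ennreal (u j))"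
    using assms(1,2) by (intro sum.cong) (simp_all add: ennreal_mult)
  finally have "1 + (\<Sum>j\<in>A. ennreal (v j)) \<le> ennreal C + (\<Sum>j\<in>A. ennreal C * ennreal (u j))"
    using assms(1) by (intro add_mono) (simp_all add: ennreal_leI[of 1 C, simplified])
  also have "\<dots> = ennreal C * (1 + (\<Sum>j\<in>A. ennreal (u j)))"
    by (simp add: distrib_left sum_distrib_left)
  finally show ?thesis .
qed

lemma sum_shift_lt:
  fixes f :: "nat \<Rightarrow> ennreal"
  shows "(\<Sum>s\<in>{k..<k+N}. f s) = (\<Sum>j<N. f (k + j))"
  by (induction N) (simp_all add: add.commute)

lemma sup_sum:
  fixes f :: "nat \<Rightarrow> ennreal"
  shows "(SUP n\<in>{m<..}. 1 + (\<Sum>s\<in>{m+1..<n}. f s)) = 1 + (\<Sum>j. f (m+1+j))"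
proof (rule antisym)
  show "(SUP n\<in>{m<..}. 1 + (\<Sum>s\<in>{m+1..<n}. f s)) \<le> 1 + (\<Sum>j. f (m+1+j))"
  proof (rule SUP_least)
    fix n assume n: "n \<in> {m<..}"
    have "(\<Sum>s\<in>{m+1..<n}. f s) = (\<Sum>j<n-(m+1). f (m+1+j))"
    proof -
      have eq: "m + 1 + (n - (m+1)) = n" using n by simp
      have "(\<Sum>s\<in>{m+1..<n}. f s) = (\<Sum>s\<in>{m+1..<m + 1 + (n - (m+1))}. f s)" by (simp only: eq)
      also have "\<dots> = (\<Sum>j<n-(m+1). f (m+1+j))" by (rule sum_shift_lt)
      finally show ?thesis .
    qed
    also have "\<dots> \<le> (\<Sum>j. f (m+1+j))" by (intro sum_le_suminf) auto
    finally show "1 + (\<Sum>s\<in>{m+1..<n}. f s) \<le> 1 + (\<Sum>j. f (m+1+j))" by (rule add_left_mono)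
  qed
next
  have "1 + (\<Sum>j. f (m+1+j)) = 1 + (SUP N. \<Sum>j<N. f (m+1+j))" by (simp add: suminf_eq_SUP)
  also have "\<dots> = (SUP N. 1 + (\<Sum>j<N. f (m+1+j)))" by (simp add: ennreal_SUP_add_right)
  also have "\<dots> \<le> (SUP n\<in>{m<..}. 1 + (\<Sum>s\<in>{m+1..<n}. f s))"
  proof (rule SUP_least)
    fix N
    have "1 + (\<Sum>j<N. f (m+1+j)) = 1 + (\<Sum>s\<in>{m+1..<m+1+N}. f s)" using sum_shift_lt[of f "m+1" N] by simp
    also have "\<dots> \<le> (SUP n\<in>{m<..}. 1 + (\<Sum>s\<in>{m+1..<n}. f s))" by (rule SUP_upper) auto
    finally show "1 + (\<Sum>j<N. f (m+1+j)) \<le> (SUP n\<in>{m<..}. 1 + (\<Sum>s\<in>{m+1..<n}. f s))" .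
  qed
  finally show "1 + (\<Sum>j. f (m+1+j)) \<le> (SUP n\<in>{m<..}. 1 + (\<Sum>s\<in>{m+1..<n}. f s))" .
qed

lemma D_mono:
  fixes f :: "nat \<Rightarrow> real"
  assumes "\<And>u. 0 \<le> f (n+1+u) \<and> f (n+1+u) \<le> f (n'+1+u)"
  shows "1 + (\<Sum>j. ennreal (\<Prod>i\<in>{n+1..n+1+j}. f i)) \<le> 1 + (\<Sum>j. ennreal (\<Prod>i\<in>{n'+1..n'+1+j}. f i))"
proof -
  have e: "(\<Prod>i\<in>{k+1..k+1+j}. f i) = (\<Prod>u\<in>{0..j}. f (k+1+u))" for k j
    using prod.atLeastAtMost_shift_0[of "k+1" "k+1+j" f] by (simp add: comp_def)
  have "(\<Prod>i\<in>{n+1..n+1+j}. f i) \<le> (\<Prod>i\<in>{n'+1..n'+1+j}. f i)" for j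
    unfolding e using assms by (intro prod_mono) auto
  hence "(\<Sum>j. ennreal (\<Prod>i\<in>{n+1..n+1+j}. f i)) \<le> (\<Sum>j. ennreal (\<Prod>i\<in>{n'+1..n'+1+j}. f i))"
    by (intro suminf_le ennreal_leI) auto
  thus ?thesis by (rule add_left_mono)
qed

context L6 begin

lemma FX_eq: "FX q p1 p2 m = 1 + (\<Sum>j. ennreal (Xv m (m+1+j)))"
  unfolding FX_def FX2_def using sup_sum[of "\<lambda>s. ennreal (Xv m s)" m] by (simp add: Xv_def)

lemma FY_eq: "FY q p1 p2 m = 1 + (\<Sum>j. ennreal (\<Prod>i\<in>{m+1..m+1+j}. zeta q p1 p2 i))"
  unfolding FY_def FY2_def using sup_sum[of "\<lambda>j. ennreal (\<Prod>i\<in>{m+1..j}. zeta q p1 p2 i)" m] by simp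

lemma mono_part:
  "(mono_on {N0<..} (DX q p1 p2) \<or> antimono_on {N0<..} (DX q p1 p2))
 \<and> (mono_on {N0<..} (DY q p1 p2) \<or> antimono_on {N0<..} (DY q p1 p2))"
proof -
  have rp: "\<And>i. i \<ge> 2 \<Longrightarrow> rh i > 0" using rh_facts(1) by blast
  consider (up) "mono_on {N0..} rh" | (down) "antimono_on {N0..} rh" using hmono by blast
  thus ?thesis
  proof cases
    case up
    have h: "rh (n+1+u) \<le> rh (n'+1+u)" if "N0 < n" "n \<le> n'" for n n' u
      using up that by (auto simp: monotone_on_def)
    have "mono_on {N0<..} (DX q p1 p2)"
    proof (rule monotone_onI)
      fix n n' assume "n \<in> {N0<..}" "n' \<in> {N0<..}" "n \<le> n'"
      thus "DX q p1 p2 n \<le> DX q p1 p2 n'" unfolding DX_def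
        using h rp by (intro D_mono) (auto simp: less_imp_le)
    qed
    moreover have "antimono_on {N0<..} (DY q p1 p2)"
    proof (rule monotone_onI)
      fix n n' assume "n \<in> {N0<..}" "n' \<in> {N0<..}" "n \<le> n'"
      thus "DY q p1 p2 n' \<le> DY q p1 p2 n" unfolding DY_def
        using h rp by (intro D_mono) (auto simp: less_imp_le le_imp_inverse_le)
    qed
    ultimately show ?thesis by blast
  next
    case down
    have h: "rh (n'+1+u) \<le> rh (n+1+u)" if "N0 < n" "n \<le> n'" for n n' u
      using down that by (auto simp: monotone_on_def)
    have "antimono_on {N0<..} (DX q p1 p2)"
    proof (rule monotone_onI)
      fix n n' assume "n \<in> {N0<..}" "n' \<in> {N0<..}" "n \<le> n'"
      thus "DX q p1 p2 n' \<le> DX q p1 p2 n" unfolding DX_def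
        using h rp by (intro D_mono) (auto simp: less_imp_le)
    qed
    moreover have "mono_on {N0<..} (DY q p1 p2)"
    proof (rule monotone_onI)
      fix n n' assume "n \<in> {N0<..}" "n' \<in> {N0<..}" "n \<le> n'"
      thus "DY q p1 p2 n \<le> DY q p1 p2 n'" unfolding DY_def
        using h rp by (intro D_mono) (auto simp: less_imp_le le_imp_inverse_le)
    qed
    ultimately show ?thesis by blast
  qed
qed

lemma comp_part: "\<exists>c7 c8 :: real. 0 < c7 \<and> c7 < c8 \<and>
            (\<forall>m n. 1 \<le> m \<and> m < n \<longrightarrow>
               ennreal c7 * DX q p1 p2 m \<le> FX q p1 p2 m \<and> FX q p1 p2 m \<le> ennreal c8 * DX q p1 p2 m \<and>
               ennreal c7 * DY q p1 p2 m \<le> FY q p1 p2 m \<and> FY q p1 p2 m \<le> ennreal c8 * DY q p1 p2 m \<and>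
               ennreal c7 * DY2 q p1 p2 m n \<le> FY2 q p1 p2 m n \<and> FY2 q p1 p2 m n \<le> ennreal c8 * DY2 q p1 p2 m n)"
proof -
  obtain cX CX where X: "cX > 0" "CX > 0" "\<And>m s. 1 \<le> m \<Longrightarrow> m < s \<Longrightarrow>
    cX * (\<Prod>i\<in>{m+1..s}. rh i) \<le> Xv m s \<and> Xv m s \<le> CX * (\<Prod>i\<in>{m+1..s}. rh i)"
    using X_bounds by blast
  obtain cz Cz where Z: "cz > 0" "Cz > 0" "\<And>k0 j. 2 \<le> k0 \<Longrightarrow> k0 \<le> j \<Longrightarrow>
   cz * (\<Prod>i\<in>{k0..j}. inverse (rh i)) \<le> (\<Prod>i\<in>{k0..j}. zeta q p1 p2 i)
   \<and> (\<Prod>i\<in>{k0..j}. zeta q p1 p2 i) \<le> Cz * (\<Prod>i\<in>{k0..j}. inverse (rh i))"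
    using zeta_prod_bounds by blast
  define c7 where "c7 = min 1 (min cX cz)"
  define c8 where "c8 = max 1 (max CX Cz) + 1"
  have c7: "0 < c7" "c7 \<le> 1" "c7 \<le> cX" "c7 \<le> cz" unfolding c7_def using X Z by auto
  have c8: "1 \<le> c8" "CX \<le> c8" "Cz \<le> c8" "c7 < c8" unfolding c8_def using c7 by auto
  have rp: "\<And>i. i \<ge> 2 \<Longrightarrow> rh i > 0" using rh_facts(1) by blast
  have P1: "0 \<le> (\<Prod>i\<in>{m+1..j}. rh i)" "0 \<le> (\<Prod>i\<in>{m+1..j}. inverse (rh i))" if "1 \<le> m" for m j
    using rp that by (auto intro!: prod_nonneg simp: less_imp_le)
  have lo_mono: "c * P \<le> x" if "c' * P \<le> x" "c \<le> c'" "0 \<le> P" for c c' P x :: real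
    using that by (meson mult_right_mono order_trans)
  have hi_mono: "x \<le> C * P" if "x \<le> C' * P" "C' \<le> C" "0 \<le> P" for C C' P x :: real
    using that by (meson mult_right_mono order_trans)
  have main: "ennreal c7 * DX q p1 p2 m \<le> FX q p1 p2 m \<and> FX q p1 p2 m \<le> ennreal c8 * DX q p1 p2 m \<and>
               ennreal c7 * DY q p1 p2 m \<le> FY q p1 p2 m \<and> FY q p1 p2 m \<le> ennreal c8 * DY q p1 p2 m \<and>
               ennreal c7 * DY2 q p1 p2 m n \<le> FY2 q p1 p2 m n \<and> FY2 q p1 p2 m n \<le> ennreal c8 * DY2 q p1 p2 m n"
    if m: "1 \<le> m" for m n
  proof (intro conjI)
    have xb: "\<And>j. cX * (\<Prod>i\<in>{m+1..m+1+j}. rh i) \<le> Xv m (m+1+j) \<and> Xv m (m+1+j) \<le> CX * (\<Prod>i\<in>{m+1..m+1+j}. rh i)"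
      by (rule X(3)[OF m]) simp
    have zb: "\<And>j. m+1 \<le> j \<Longrightarrow> cz * (\<Prod>i\<in>{m+1..j}. inverse (rh i)) \<le> (\<Prod>i\<in>{m+1..j}. zeta q p1 p2 i)
      \<and> (\<Prod>i\<in>{m+1..j}. zeta q p1 p2 i) \<le> Cz * (\<Prod>i\<in>{m+1..j}. inverse (rh i))"
      using Z(3) m by auto
    show "ennreal c7 * DX q p1 p2 m \<le> FX q p1 p2 m" unfolding DX_def FX_eq
    proof (rule en_lo_inf)
      show "0 \<le> c7" "c7 \<le> 1" using c7 by auto
      fix j
      show "0 \<le> (\<Prod>i\<in>{m+1..m+1+j}. rh i)" by (rule P1(1)[OF m])
      show "c7 * (\<Prod>i\<in>{m+1..m+1+j}. rh i) \<le> Xv m (m+1+j)"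
        by (rule lo_mono[OF conjunct1[OF xb] c7(3) P1(1)[OF m]])
    qed
    show "FX q p1 p2 m \<le> ennreal c8 * DX q p1 p2 m" unfolding DX_def FX_eq
    proof (rule en_hi_inf)
      show "1 \<le> c8" using c8 by auto
      fix j
      show "0 \<le> (\<Prod>i\<in>{m+1..m+1+j}. rh i)" by (rule P1(1)[OF m])
      show "Xv m (m+1+j) \<le> c8 * (\<Prod>i\<in>{m+1..m+1+j}. rh i)"
        by (rule hi_mono[OF conjunct2[OF xb] c8(2) P1(1)[OF m]])
    qed
    show "ennreal c7 * DY q p1 p2 m \<le> FY q p1 p2 m" unfolding DY_def FY_eq
    proof (rule en_lo_inf)
      show "0 \<le> c7" "c7 \<le> 1" using c7 by auto
      fix j
      show "0 \<le> (\<Prod>i\<in>{m+1..m+1+j}. inverse (rh i))" by (rule P1(2)[OF m])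
      show "c7 * (\<Prod>i\<in>{m+1..m+1+j}. inverse (rh i)) \<le> (\<Prod>i\<in>{m+1..m+1+j}. zeta q p1 p2 i)"
        by (rule lo_mono[OF conjunct1[OF zb[OF le_add1]] c7(4) P1(2)[OF m]])
    qed
    show "FY q p1 p2 m \<le> ennreal c8 * DY q p1 p2 m" unfolding DY_def FY_eq
    proof (rule en_hi_inf)
      show "1 \<le> c8" using c8 by auto
      fix j
      show "0 \<le> (\<Prod>i\<in>{m+1..m+1+j}. inverse (rh i))" by (rule P1(2)[OF m])
      show "(\<Prod>i\<in>{m+1..m+1+j}. zeta q p1 p2 i) \<le> c8 * (\<Prod>i\<in>{m+1..m+1+j}. inverse (rh i))"
        by (rule hi_mono[OF conjunct2[OF zb[OF le_add1]] c8(3) P1(2)[OF m]])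
    qed
    show "ennreal c7 * DY2 q p1 p2 m n \<le> FY2 q p1 p2 m n" unfolding DY2_def FY2_def
    proof (rule en_lo_fin)
      show "0 \<le> c7" "c7 \<le> 1" using c7 by auto
      fix j assume j: "j \<in> {m+1..<n}"
      hence j': "m + 1 \<le> j" by simp
      show "0 \<le> (\<Prod>i\<in>{m+1..j}. inverse (rh i))" by (rule P1(2)[OF m])
      show "c7 * (\<Prod>i\<in>{m+1..j}. inverse (rh i)) \<le> (\<Prod>i\<in>{m+1..j}. zeta q p1 p2 i)"
        by (rule lo_mono[OF conjunct1[OF zb[OF j']] c7(4) P1(2)[OF m]])
    qed
    show "FY2 q p1 p2 m n \<le> ennreal c8 * DY2 q p1 p2 m n" unfolding DY2_def FY2_def
    proof (rule en_hi_fin)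
      show "1 \<le> c8" using c8 by auto
      fix j assume j: "j \<in> {m+1..<n}"
      hence j': "m + 1 \<le> j" by simp
      show "0 \<le> (\<Prod>i\<in>{m+1..j}. inverse (rh i))" by (rule P1(2)[OF m])
      show "(\<Prod>i\<in>{m+1..j}. zeta q p1 p2 i) \<le> c8 * (\<Prod>i\<in>{m+1..j}. inverse (rh i))"
        by (rule hi_mono[OF conjunct2[OF zb[OF j']] c8(3) P1(2)[OF m]])
    qed
  qed
  show ?thesis using c7 c8 main by blast
qed

end

theorem lemma6:
  fixes q p1 p2 :: "nat \<Rightarrow> real" and a b :: real and N0 :: nat
  assumes hq: "\<And>k. k \<ge> 2 \<Longrightarrow> q k > 0"
    and hp1: "\<And>k. k \<ge> 2 \<Longrightarrow> p1 k \<ge> 0"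
    and hp2: "\<And>k. k \<ge> 2 \<Longrightarrow> p2 k > 0"
    and hsum: "\<And>k. k \<ge> 2 \<Longrightarrow> q k + p1 k + p2 k = 1"
    and ha: "aa q p1 p2 \<longlonglongrightarrow> a" and apos: "a > 0"
    and hb: "bb q p1 p2 \<longlonglongrightarrow> b" and bpos: "b > 0"
    and hN0: "N0 \<ge> 2"
    and hmono: "mono_on {N0..} (rho q p1 p2) \<or> antimono_on {N0..} (rho q p1 p2)"
  shows "(mono_on {N0<..} (DX q p1 p2) \<or> antimono_on {N0<..} (DX q p1 p2))
       \<and> (mono_on {N0<..} (DY q p1 p2) \<or> antimono_on {N0<..} (DY q p1 p2))
       \<and> (\<exists>c7 c8 :: real. 0 < c7 \<and> c7 < c8 \<and>
            (\<forall>m n. 1 \<le> m \<and> m < n \<longrightarrow>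
               ennreal c7 * DX q p1 p2 m \<le> FX q p1 p2 m \<and> FX q p1 p2 m \<le> ennreal c8 * DX q p1 p2 m \<and>
               ennreal c7 * DY q p1 p2 m \<le> FY q p1 p2 m \<and> FY q p1 p2 m \<le> ennreal c8 * DY q p1 p2 m \<and>
               ennreal c7 * DY2 q p1 p2 m n \<le> FY2 q p1 p2 m n \<and> FY2 q p1 p2 m n \<le> ennreal c8 * DY2 q p1 p2 m n))"
proof -
  interpret L6 q p1 p2 a b N0
    using hq hp1 hp2 ha apos hb bpos hmono by unfold_locales auto
  show ?thesis using mono_part comp_part by blast
qed

end
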